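(* Let $h:\mathbb{R}^p\to\mathbb{R}$ be a $\gamma$-strongly concave function with $\gamma>0$ whose gradient is Lipschitz continuous with constant $M>0$. Let $c\ge0$ and let $\varphi:\mathbb{R}^p\to\mathbb{R}^p$ be a mapping with $\|\varphi(\mathbf{z})\|\le c$ for all $\mathbf{z}\in\mathbb{R}^p$. For $\mathbf{z}\in\mathbb{R}^p$ and $\beta\in(0,\frac{\gamma}{8M^2}]$ define $\mathbf{y}=\mathbf{z}+\beta(\nabla h(\mathbf{z})+\varphi(\mathbf{z}))$. Then there is a compact set $V\subset\mathbb{R}^p$, depending on $c$ and $h$ but not on $\beta$, such that $$\|\mathbf{y}\|\le\|\mathbf{z}\|\ \text{ if }\mathbf{z}\notin V,\qquad \|\mathbf{y}\|\le R\ \text{ if }\mathbf{z}\in V,$$ where $R=\max_{\mathbf{v}\in V}\{\|\mathbf{v}\|+\frac{\gamma}{8M^2}\|\nabla h(\mathbf{v})\|\}+\frac{\gamma c}{8M^2}$. *)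

theory Defs
  imports "HOL-Analysis.Analysis"
begin

definition strongly_concave :: "real \<Rightarrow> ('a::real_normed_vector \<Rightarrow> real) \<Rightarrow> bool" where
  "strongly_concave \<gamma> h \<longleftrightarrow>
     (\<forall>x y. \<forall>t::real. 0 \<le> t \<and> t \<le> 1 \<longrightarrow>
        h (t *\<^sub>R x + (1 - t) *\<^sub>R y) \<ge>
          t * h x + (1 - t) * h y + \<gamma> / 2 * t * (1 - t) * (norm (x - y))\<^sup>2)"

end

theory Submission
  imports Defs
begin

lemma grad_ineq:
  fixes h :: "real ^ 'p \<Rightarrow> real" and gradh :: "real ^ 'p \<Rightarrow> real ^ 'p"
  assumes sc: "strongly_concave \<gamma> h" and gd: "\<And>x. GDERIV h x :> gradh x"
  shows "gradh y \<bullet> (x - y) \<ge> h x - h y + \<gamma>/2 * (norm (x - y))\<^sup>2"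
proof -
  define g where "g t = h (y + t *\<^sub>R (x - y))" for t :: real
  have D1: "((\<lambda>t. y + t *\<^sub>R (x - y)) has_derivative (\<lambda>t. t *\<^sub>R (x - y))) (at 0)"
    by (auto intro!: derivative_eq_intros)
  have D2: "(h has_derivative (\<lambda>v. v \<bullet> gradh y)) (at (y + 0 *\<^sub>R (x - y)))"
    using gd[of y] by (simp add: gderiv_def)
  have D: "(g has_derivative (\<lambda>t. (t *\<^sub>R (x - y)) \<bullet> gradh y)) (at 0)"
    unfolding g_def using has_derivative_compose[OF D1 D2] by (simp add: o_def)
  hence "(g has_field_derivative (gradh y \<bullet> (x - y))) (at 0)"
    unfolding has_field_derivative_def by (simp add: mult.commute[of _ "gradh y \<bullet> (x - y)"] inner_commute)
  hence "((\<lambda>t. (g (0 + t) - g 0) / t) \<longlongrightarrow> gradh y \<bullet> (x - y)) (at 0)"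
    by (simp add: DERIV_def)
  hence L: "((\<lambda>t. (g t - g 0) / t) \<longlongrightarrow> gradh y \<bullet> (x - y)) (at_right 0)"
    by (simp add: filterlim_at_split)
  have R: "((\<lambda>t. h x - h y + \<gamma>/2 * (1 - t) * (norm (x - y))\<^sup>2) \<longlongrightarrow> h x - h y + \<gamma>/2 * (1 - 0) * (norm (x - y))\<^sup>2) (at_right 0)"
    by (intro tendsto_intros)
  have ev: "\<forall>\<^sub>F t in at_right 0. h x - h y + \<gamma>/2 * (1 - t) * (norm (x - y))\<^sup>2 \<le> (g t - g 0) / t"
  proof -
    have "\<forall>\<^sub>F t in at_right (0::real). t < 1" 
      using eventually_at_right_real[of 0 1] by (rule eventually_mono) auto
    moreover have "\<forall>\<^sub>F t in at_right (0::real). t > 0" 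
      by (simp add: eventually_at_right_less eventually_at_filter)
    ultimately show ?thesis
    proof eventually_elim
      case (elim t)
      have "h (t *\<^sub>R x + (1 - t) *\<^sub>R y) \<ge> t * h x + (1 - t) * h y + \<gamma> / 2 * t * (1 - t) * (norm (x - y))\<^sup>2"
        using sc elim unfolding strongly_concave_def by auto
      moreover have "t *\<^sub>R x + (1 - t) *\<^sub>R y = y + t *\<^sub>R (x - y)" by (simp add: algebra_simps)
      ultimately have "g t - g 0 \<ge> t * (h x - h y + \<gamma>/2 * (1 - t) * (norm (x - y))\<^sup>2)"
        unfolding g_def by (simp add: algebra_simps)
      thus ?case using elim by (simp add: field_simps)
    qed
  qed
  have "h x - h y + \<gamma>/2 * (1 - 0) * (norm (x - y))\<^sup>2 \<le> gradh y \<bullet> (x - y)"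
    by (rule tendsto_le[OF _ L R ev]) simp
  thus ?thesis by simp
qed

theorem lemma1:
  fixes h :: "real ^ 'p \<Rightarrow> real" and gradh :: "real ^ 'p \<Rightarrow> real ^ 'p"
    and \<gamma> M c :: real
  assumes "\<gamma> > 0" and "M > 0" and "c \<ge> 0"
    and "strongly_concave \<gamma> h"
    and "\<And>x. GDERIV h x :> gradh x"
    and "M-lipschitz_on UNIV gradh"
  shows "\<exists>V::(real ^ 'p) set. compact V \<and>
    (\<forall>\<phi> :: real ^ 'p \<Rightarrow> real ^ 'p. (\<forall>z. norm (\<phi> z) \<le> c) \<longrightarrow>
      (\<forall>\<beta>. 0 < \<beta> \<and> \<beta> \<le> \<gamma> / (8 * M\<^sup>2) \<longrightarrow>
        (\<forall>z. (z \<notin> V \<longrightarrow> norm (z + \<beta> *\<^sub>R (gradh z + \<phi> z)) \<le> norm z) \<and>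
             (z \<in> V \<longrightarrow> norm (z + \<beta> *\<^sub>R (gradh z + \<phi> z)) \<le>
                (SUP v\<in>V. norm v + \<gamma> / (8 * M\<^sup>2) * norm (gradh v)) + \<gamma> * c / (8 * M\<^sup>2)))))"
proof -
  note gp = assms(1) and Mp = assms(2) and cp = assms(3)
  define a where "a = norm (gradh 0) + c"
  define r0 where "r0 = 2 * a / \<gamma> + a / M"
  define V where "V = cball (0::real ^ 'p) r0"
  define k where "k = \<gamma> / (8 * M\<^sup>2)"
  have a0: "a \<ge> 0" using cp by (simp add: a_def)
  have k0: "k > 0" using gp Mp by (simp add: k_def)
  have cont: "continuous_on UNIV gradh"
    using assms(6) by (rule lipschitz_on_continuous_on)
  have bdd: "bdd_above ((\<lambda>v. norm v + k * norm (gradh v)) ` V)"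
  proof -
    have "continuous_on V (\<lambda>v. norm v + k * norm (gradh v))"
      by (intro continuous_intros continuous_on_subset[OF cont]) auto
    hence "compact ((\<lambda>v. norm v + k * norm (gradh v)) ` V)"
      by (rule compact_continuous_image) (simp add: V_def)
    thus ?thesis by (intro bounded_imp_bdd_above compact_imp_bounded)
  qed
  have mono: "gradh z \<bullet> z \<le> gradh 0 \<bullet> z - \<gamma> * (norm z)\<^sup>2" for z
  proof -
    have "gradh 0 \<bullet> (z - 0) \<ge> h z - h 0 + \<gamma>/2 * (norm (z - 0))\<^sup>2"
      by (rule grad_ineq[OF assms(4) assms(5)])
    moreover have "gradh z \<bullet> (0 - z) \<ge> h 0 - h z + \<gamma>/2 * (norm (0 - z))\<^sup>2"
      by (rule grad_ineq[OF assms(4) assms(5)])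
    ultimately show ?thesis by (simp add: inner_minus_right)
  qed
  have lip: "norm (gradh z - gradh 0) \<le> M * norm z" for z
    using lipschitz_onD[OF assms(6), of z 0] by (simp add: dist_norm)
  show ?thesis
  proof (intro exI[of _ V] conjI allI impI)
    show "compact V" by (simp add: V_def)
  next
    fix \<phi> :: "real ^ 'p \<Rightarrow> real ^ 'p" and \<beta> z
    assume phi: "\<forall>z. norm (\<phi> z) \<le> c" and b: "0 < \<beta> \<and> \<beta> \<le> \<gamma> / (8 * M\<^sup>2)"
    hence b0: "\<beta> > 0" and bk: "\<beta> \<le> k" by (auto simp: k_def)
    {
      assume "z \<in> V"
      have "norm (z + \<beta> *\<^sub>R (gradh z + \<phi> z)) \<le> norm z + norm (\<beta> *\<^sub>R (gradh z + \<phi> z))"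
        by (rule norm_triangle_ineq)
      also have "norm (\<beta> *\<^sub>R (gradh z + \<phi> z)) = \<beta> * norm (gradh z + \<phi> z)"
        using b0 by simp
      also have "\<dots> \<le> \<beta> * (norm (gradh z) + norm (\<phi> z))"
        using b0 by (intro mult_left_mono norm_triangle_ineq) auto
      also have "\<dots> \<le> k * (norm (gradh z) + c)"
        using bk b0 phi by (intro mult_mono) (auto intro: add_left_mono)
      finally have "norm (z + \<beta> *\<^sub>R (gradh z + \<phi> z)) \<le> (norm z + k * norm (gradh z)) + k * c"
        by (simp add: algebra_simps)
      also have "norm z + k * norm (gradh z) \<le> (SUP v\<in>V. norm v + k * norm (gradh v))"
        by (rule cSUP_upper[OF \<open>z \<in> V\<close> bdd])
      finally show "norm (z + \<beta> *\<^sub>R (gradh z + \<phi> z)) \<le>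
                (SUP v\<in>V. norm v + \<gamma> / (8 * M\<^sup>2) * norm (gradh v)) + \<gamma> * c / (8 * M\<^sup>2)"
        by (simp add: k_def)
    }
    {
      assume "z \<notin> V"
      define r where "r = norm z"
      define w where "w = gradh z + \<phi> z"
      have rr: "r > r0" using \<open>z \<notin> V\<close> by (simp add: V_def r_def)
      have r1: "r \<ge> 2 * a / \<gamma>" and r2: "r \<ge> a / M" proof -
        have "a / M \<ge> 0" "2 * a / \<gamma> \<ge> 0" using a0 gp Mp by auto
        thus "r \<ge> 2 * a / \<gamma>" "r \<ge> a / M" using rr by (auto simp: r0_def)
      qed
      have r0': "r \<ge> 0" by (simp add: r_def)
      have zw: "z \<bullet> w \<le> a * r - \<gamma> * r\<^sup>2"
      proof -
        have "z \<bullet> w = gradh z \<bullet> z + \<phi> z \<bullet> z" by (simp add: w_def inner_add_right inner_commute)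
        also have "\<dots> \<le> gradh 0 \<bullet> z - \<gamma> * r\<^sup>2 + c * r"
        proof -
          have "\<phi> z \<bullet> z \<le> norm (\<phi> z) * r" using Cauchy_Schwarz_ineq2[of "\<phi> z" z] by (simp add: r_def)
          also have "\<dots> \<le> c * r" using phi r0' by (intro mult_right_mono) auto
          finally show ?thesis using mono[of z] by (simp add: r_def)
        qed
        also have "\<dots> \<le> norm (gradh 0) * r - \<gamma> * r\<^sup>2 + c * r"
          using Cauchy_Schwarz_ineq2[of "gradh 0" z] by (simp add: r_def)
        finally show ?thesis by (simp add: a_def algebra_simps)
      qed
      have nw: "norm w \<le> a + M * r"
      proof -
        have "norm (gradh z) \<le> norm (gradh 0) + M * r"
          using lip[of z] norm_triangle_ineq2[of "gradh z" "gradh 0"] by (simp add: r_def)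
        thus ?thesis using phi norm_triangle_ineq[of "gradh z" "\<phi> z"] by (simp add: w_def a_def) (smt (verit) norm_ge_zero)
      qed
      have w2: "(norm w)\<^sup>2 \<le> 2 * a\<^sup>2 + 2 * M\<^sup>2 * r\<^sup>2"
      proof -
        have "(norm w)\<^sup>2 \<le> (a + M * r)\<^sup>2" using nw by (simp add: power_mono)
        also have "\<dots> \<le> 2 * a\<^sup>2 + 2 * M\<^sup>2 * r\<^sup>2"
        proof -
          have "0 \<le> (a - M * r)\<^sup>2" by simp
          thus ?thesis by (simp add: power2_eq_square algebra_simps)
        qed
        finally show ?thesis .
      qed
      have bw: "\<beta> * (norm w)\<^sup>2 \<le> \<gamma> * a\<^sup>2 / (4 * M\<^sup>2) + \<gamma> * r\<^sup>2 / 4"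
      proof -
        have "\<beta> * (norm w)\<^sup>2 \<le> k * (2 * a\<^sup>2 + 2 * M\<^sup>2 * r\<^sup>2)"
          using mult_mono[OF bk w2] k0 by simp
        also have "\<dots> = \<gamma> * a\<^sup>2 / (4 * M\<^sup>2) + \<gamma> * r\<^sup>2 / 4"
          using Mp by (simp add: k_def field_simps power2_eq_square)
        finally show ?thesis .
      qed
      have g1: "\<gamma> * r\<^sup>2 \<ge> 2 * a * r"
      proof -
        have "\<gamma> * r \<ge> 2 * a" using r1 gp by (simp add: field_simps)
        hence "\<gamma> * r * r \<ge> 2 * a * r" using r0' by (rule mult_right_mono)
        thus ?thesis by (simp add: power2_eq_square algebra_simps)
      qed
      have g2: "\<gamma> * a\<^sup>2 / (4 * M\<^sup>2) \<le> \<gamma> * r\<^sup>2 / 4"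
      proof -
        have "M * r \<ge> a" using r2 Mp by (simp add: field_simps)
        hence "a\<^sup>2 \<le> (M * r)\<^sup>2" using a0 by (simp add: power_mono)
        hence "a\<^sup>2 / M\<^sup>2 \<le> r\<^sup>2" using Mp by (simp add: field_simps power_mult_distrib)
        hence "\<gamma> * (a\<^sup>2 / M\<^sup>2) \<le> \<gamma> * r\<^sup>2" using gp by (intro mult_left_mono) auto
        thus ?thesis by simp
      qed
      have Q: "2 * (a * r - \<gamma> * r\<^sup>2) + \<beta> * (norm w)\<^sup>2 \<le> 0"
        proof -
        have "\<gamma> * r\<^sup>2 \<ge> 0" using gp by simp
        thus ?thesis using bw g1 g2 by (simp add: right_diff_distrib)
      qed
      have "(norm (z + \<beta> *\<^sub>R w))\<^sup>2 = r\<^sup>2 + \<beta> * (2 * (z \<bullet> w) + \<beta> * (norm w)\<^sup>2)"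
        unfolding r_def power2_norm_eq_inner by (simp add: inner_add_left inner_add_right inner_commute algebra_simps)
      also have "\<dots> \<le> r\<^sup>2 + \<beta> * 0"
        using zw Q b0 by (intro add_left_mono mult_left_mono) auto
      finally have "(norm (z + \<beta> *\<^sub>R w))\<^sup>2 \<le> r\<^sup>2" by simp
      hence "norm (z + \<beta> *\<^sub>R w) \<le> r" using r0' by (rule power2_le_imp_le)
      thus "norm (z + \<beta> *\<^sub>R (gradh z + \<phi> z)) \<le> norm z" by (simp add: w_def r_def)
    }
  qed
qed

end
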